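(* Assume $(H,T)$ satisfies the Standing Assumption (Assumption A). Let $[\gamma],[\eta]\in H/T$ and suppose there exist $\gamma'\in[\gamma]$ and $\eta'\in[\eta]$ with $(\gamma',\eta')\in H^{(2)}$. Then for every $\gamma''\in[\gamma]$ there is a unique $\eta''\in[\eta]$ with $(\gamma'',\eta'')\in H^{(2)}$.
   Context: Standing Assumption (Assumption A). $H$ is a Hausdorff étale groupoid with $H^{(0)}=T$, and $p:T\to X$ is an open quotient map such that each $T_x:=p^{-1}(x)$ is a compact Abelian group (so $T$ is a bundle of compact Abelian groups over $X$; this group structure is not the groupoid structure of $H$). Put $p_s=p\circ s$, $p_r=p\circ r$ on $H$. Write $t{\blacktriangleright}\eta$ (defined when $p(t)=p_r(\eta)$) for a left action and $\eta{\blacktriangleleft}t$ (defined when $p(t)=p_s(\eta)$) for a right action of the group bundle $T$ on $H$. Then: (1) these left and right actions are continuous, commute, and are free and proper, with (a) $t{\blacktriangleright}u=u{\blacktriangleleft}t$ for all $u\in H^{(0)}$, $t\in T$; (b) $r(t{\blacktriangleright}\gamma)=t{\blacktriangleright}r(\gamma)$ for $\gamma\in p_r^{-1}(p(t))$ and $s(\eta{\blacktriangleleft}t)=s(\eta){\blacktriangleleft}t$ for $\eta\in p_s^{-1}(p(t))$; (2) there are continuous maps $\lambda:H\,{}_{p_s}\!*_p\,T\to T$, $(\eta,t)\mapsto\lambda_\eta(t)$, and $\rho:T\,{}_p\!*_{p_r}\,H\to T$, $(t,\eta)\mapsto\rho_\eta(t)$, such that for all $\gamma,\eta\in H$ and $t\in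 T$ (whenever defined): (a) $\eta{\blacktriangleleft}t=\lambda_\eta(t){\blacktriangleright}\eta$; (b) $t{\blacktriangleright}\eta=\eta{\blacktriangleleft}\rho_\eta(t)$; (c) $(\gamma\eta){\blacktriangleleft}t=(\gamma{\blacktriangleleft}\lambda_\eta(t))(\eta{\blacktriangleleft}t)$; (d) $t{\blacktriangleright}(\gamma\eta)=(t{\blacktriangleright}\gamma)(\rho_\gamma(t){\blacktriangleright}\eta)$; (e) $(\eta{\blacktriangleleft}t)^{-1}=t{\blacktriangleright}\eta^{-1}$; (f) $(t{\blacktriangleright}\eta)^{-1}=\eta^{-1}{\blacktriangleleft}t$. $H/T$ is the quotient of $H$ by the right $T$-action; $[\eta]=\{\eta{\blacktriangleleft}t:t\in T_{p_s(\eta)}\}$ (equivalently the left $T$-orbit of $\eta$). *)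

theory Defs
  imports "HOL-Analysis.Analysis" "HOL-Algebra.Group"
begin

text \<open>A groupoid on the whole type 'h: source s, range r, multiplication m
  (defined on composable pairs, s a = r b), inverse i. The unit space is the range of s.\<close>
definition groupoid :: "('h \<Rightarrow> 'h) \<Rightarrow> ('h \<Rightarrow> 'h) \<Rightarrow> ('h \<Rightarrow> 'h \<Rightarrow> 'h) \<Rightarrow> ('h \<Rightarrow> 'h) \<Rightarrow> bool" where
  "groupoid s r m i \<longleftrightarrow>
     (\<forall>a b. s a = r b \<longrightarrow> s (m a b) = s b \<and> r (m a b) = r a) \<and>
     (\<forall>a b c. s a = r b \<and> s b = r c \<longrightarrow> m (m a b) c = m a (m b c)) \<and>
     (\<forall>a. s (s a) = s a \<and> r (s a) = s a \<and> s (r a) = r a \<and> r (r a) = r a) \<and>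
     (\<forall>a. m (r a) a = a \<and> m a (s a) = a) \<and>
     (\<forall>a. s (i a) = r a \<and> r (i a) = s a \<and> m a (i a) = r a \<and> m (i a) a = s a)"

definition unit_space :: "('h \<Rightarrow> 'h) \<Rightarrow> 'h set" where
  "unit_space s = range s"

definition composable :: "('h \<Rightarrow> 'h) \<Rightarrow> ('h \<Rightarrow> 'h) \<Rightarrow> ('h \<times> 'h) set" where
  "composable s r = {(a, b). s a = r b}"

definition local_homeo :: "('a::topological_space \<Rightarrow> 'a) \<Rightarrow> bool" where
  "local_homeo f \<longleftrightarrow> (\<forall>x. \<exists>U. open U \<and> x \<in> U \<and> open (f ` U) \<and> (\<exists>g. homeomorphism U (f ` U) f g))"

text \<open>Hausdorffness is imposed through the type class t2_space on 'h.\<close>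
definition etale_groupoid ::
  "('h::topological_space \<Rightarrow> 'h) \<Rightarrow> ('h \<Rightarrow> 'h) \<Rightarrow> ('h \<Rightarrow> 'h \<Rightarrow> 'h) \<Rightarrow> ('h \<Rightarrow> 'h) \<Rightarrow> bool" where
  "etale_groupoid s r m i \<longleftrightarrow> groupoid s r m i \<and>
     continuous_on (composable s r) (\<lambda>(a, b). m a b) \<and> continuous_on UNIV i \<and>
     local_homeo r \<and> local_homeo s"

definition fib :: "'h set \<Rightarrow> ('h \<Rightarrow> 'x) \<Rightarrow> 'x \<Rightarrow> 'h set" where
  "fib T p x = {t \<in> T. p t = x}"

definition fibre_group :: "'h set \<Rightarrow> ('h \<Rightarrow> 'x) \<Rightarrow> ('h \<Rightarrow> 'h \<Rightarrow> 'h) \<Rightarrow> ('x \<Rightarrow> 'h) \<Rightarrow> 'x \<Rightarrow> 'h monoid" where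
  "fibre_group T p gm ge x = \<lparr>carrier = fib T p x, mult = gm, one = ge x\<rparr>"

definition compact_abelian_group_bundle ::
  "'h::topological_space set \<Rightarrow> ('h \<Rightarrow> 'x::topological_space) \<Rightarrow> ('h \<Rightarrow> 'h \<Rightarrow> 'h) \<Rightarrow> ('x \<Rightarrow> 'h) \<Rightarrow> bool" where
  "compact_abelian_group_bundle T p gm ge \<longleftrightarrow>
     continuous_map (top_of_set T) euclidean p \<and>
     quotient_map (top_of_set T) euclidean p \<and>
     open_map (top_of_set T) euclidean p \<and>
     (\<forall>x. comm_group (fibre_group T p gm ge x) \<and> compact (fib T p x)) \<and>
     continuous_on {(a, b). a \<in> T \<and> b \<in> T \<and> p a = p b} (\<lambda>(a, b). gm a b) \<and>
     continuous_on UNIV ge \<and>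
     continuous_on T (\<lambda>a. inv\<^bsub>fibre_group T p gm ge (p a)\<^esub> a)"

definition proper_on :: "'a::topological_space set \<Rightarrow> ('a \<Rightarrow> 'b::topological_space) \<Rightarrow> bool" where
  "proper_on D F \<longleftrightarrow> (\<forall>K. compact K \<longrightarrow> compact {z \<in> D. F z \<in> K})"

text \<open>Parameters: groupoid (s, r, m, i) on 'h with H^(0) = T = range s;
  projection p; fibrewise group multiplication gm and units ge; left action lact t \<eta> = t \<triangleright> \<eta>;
  right action ract \<eta> t = \<eta> \<triangleleft> t; lam \<eta> t = \<lambda>_\<eta>(t); rho \<eta> t = \<rho>_\<eta>(t).
  Equations are required whenever both sides are defined.\<close>
definition standing_assumption ::
  "('h::t2_space \<Rightarrow> 'h) \<Rightarrow> ('h \<Rightarrow> 'h) \<Rightarrow> ('h \<Rightarrow> 'h \<Rightarrow> 'h) \<Rightarrow> ('h \<Rightarrow> 'h) \<Rightarrow>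
   ('h \<Rightarrow> 'x::topological_space) \<Rightarrow> ('h \<Rightarrow> 'h \<Rightarrow> 'h) \<Rightarrow> ('x \<Rightarrow> 'h) \<Rightarrow>
   ('h \<Rightarrow> 'h \<Rightarrow> 'h) \<Rightarrow> ('h \<Rightarrow> 'h \<Rightarrow> 'h) \<Rightarrow> ('h \<Rightarrow> 'h \<Rightarrow> 'h) \<Rightarrow> ('h \<Rightarrow> 'h \<Rightarrow> 'h) \<Rightarrow> bool" where
  "standing_assumption s r m i p gm ge lact ract lam rho \<longleftrightarrow>
   (let T = unit_space s;
        LD = {(t, \<eta>). t \<in> T \<and> p t = p (r \<eta>)};
        RD = {(\<eta>, t). t \<in> T \<and> p t = p (s \<eta>)} in
     etale_groupoid s r m i \<and>
     compact_abelian_group_bundle T p gm ge \<and>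
     \<comment> \<open>left action of the group bundle T on H with anchor p_r\<close>
     (\<forall>\<eta>. lact (ge (p (r \<eta>))) \<eta> = \<eta>) \<and>
     (\<forall>t \<eta>. (t, \<eta>) \<in> LD \<longrightarrow> p (r (lact t \<eta>)) = p t) \<and>
     (\<forall>t1 t2 \<eta>. (t2, \<eta>) \<in> LD \<and> t1 \<in> T \<and> p t1 = p t2 \<longrightarrow> lact t1 (lact t2 \<eta>) = lact (gm t1 t2) \<eta>) \<and>
     \<comment> \<open>right action of the group bundle T on H with anchor p_s\<close>
     (\<forall>\<eta>. ract \<eta> (ge (p (s \<eta>))) = \<eta>) \<and>
     (\<forall>\<eta> t. (\<eta>, t) \<in> RD \<longrightarrow> p (s (ract \<eta> t)) = p t) \<and>
     (\<forall>\<eta> t1 t2. (\<eta>, t1) \<in> RD \<and> t2 \<in> T \<and> p t2 = p t1 \<longrightarrow> ract (ract \<eta> t1) t2 = ract \<eta> (gm t1 t2)) \<and>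
     \<comment> \<open>(1): continuous, commuting, free, proper\<close>
     continuous_on LD (\<lambda>(t, \<eta>). lact t \<eta>) \<and>
     continuous_on RD (\<lambda>(\<eta>, t). ract \<eta> t) \<and>
     (\<forall>t1 t2 \<eta>. (t1, \<eta>) \<in> LD \<and> (\<eta>, t2) \<in> RD \<and> (lact t1 \<eta>, t2) \<in> RD \<and> (t1, ract \<eta> t2) \<in> LD
        \<longrightarrow> ract (lact t1 \<eta>) t2 = lact t1 (ract \<eta> t2)) \<and>
     (\<forall>t \<eta>. (t, \<eta>) \<in> LD \<and> lact t \<eta> = \<eta> \<longrightarrow> t = ge (p t)) \<and>
     (\<forall>\<eta> t. (\<eta>, t) \<in> RD \<and> ract \<eta> t = \<eta> \<longrightarrow> t = ge (p t)) \<and>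
     proper_on LD (\<lambda>(t, \<eta>). (lact t \<eta>, \<eta>)) \<and>
     proper_on RD (\<lambda>(\<eta>, t). (ract \<eta> t, \<eta>)) \<and>
     \<comment> \<open>(1a)\<close>
     (\<forall>u t. u \<in> T \<and> t \<in> T \<and> p t = p u \<longrightarrow> lact t u = ract u t) \<and>
     \<comment> \<open>(1b)\<close>
     (\<forall>t \<gamma>. (t, \<gamma>) \<in> LD \<longrightarrow> r (lact t \<gamma>) = lact t (r \<gamma>)) \<and>
     (\<forall>\<eta> t. (\<eta>, t) \<in> RD \<longrightarrow> s (ract \<eta> t) = ract (s \<eta>) t) \<and>
     \<comment> \<open>(2): continuous maps lam : H _{p_s}*_p T \<rightarrow> T and rho : T _p*_{p_r} H \<rightarrow> T\<close>
     (\<forall>\<eta> t. (\<eta>, t) \<in> RD \<longrightarrow> lam \<eta> t \<in> T \<and> p (lam \<eta> t) = p (r \<eta>)) \<and>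
     (\<forall>t \<eta>. (t, \<eta>) \<in> LD \<longrightarrow> rho \<eta> t \<in> T \<and> p (rho \<eta> t) = p (s \<eta>)) \<and>
     continuous_on RD (\<lambda>(\<eta>, t). lam \<eta> t) \<and>
     continuous_on {(t, \<eta>). (t, \<eta>) \<in> LD} (\<lambda>(t, \<eta>). rho \<eta> t) \<and>
     \<comment> \<open>(2a), (2b)\<close>
     (\<forall>\<eta> t. (\<eta>, t) \<in> RD \<longrightarrow> ract \<eta> t = lact (lam \<eta> t) \<eta>) \<and>
     (\<forall>t \<eta>. (t, \<eta>) \<in> LD \<longrightarrow> lact t \<eta> = ract \<eta> (rho \<eta> t)) \<and>
     \<comment> \<open>(2c)\<close>
     (\<forall>\<gamma> \<eta> t. s \<gamma> = r \<eta> \<and> (\<eta>, t) \<in> RD \<and> s (ract \<gamma> (lam \<eta> t)) = r (ract \<eta> t) \<longrightarrow>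
        ract (m \<gamma> \<eta>) t = m (ract \<gamma> (lam \<eta> t)) (ract \<eta> t)) \<and>
     \<comment> \<open>(2d)\<close>
     (\<forall>\<gamma> \<eta> t. s \<gamma> = r \<eta> \<and> (t, \<gamma>) \<in> LD \<and> s (lact t \<gamma>) = r (lact (rho \<gamma> t) \<eta>) \<longrightarrow>
        lact t (m \<gamma> \<eta>) = m (lact t \<gamma>) (lact (rho \<gamma> t) \<eta>)) \<and>
     \<comment> \<open>(2e), (2f)\<close>
     (\<forall>\<eta> t. (\<eta>, t) \<in> RD \<longrightarrow> i (ract \<eta> t) = lact t (i \<eta>)) \<and>
     (\<forall>t \<eta>. (t, \<eta>) \<in> LD \<longrightarrow> i (lact t \<eta>) = ract (i \<eta>) t))"

text \<open>The class [\<eta>] in H/T: the right T-orbit of \<eta>.\<close>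
definition orbit :: "('h \<Rightarrow> 'h) \<Rightarrow> ('h \<Rightarrow> 'x) \<Rightarrow> ('h \<Rightarrow> 'h \<Rightarrow> 'h) \<Rightarrow> 'h \<Rightarrow> 'h set" where
  "orbit s p ract \<eta> = {ract \<eta> t | t. t \<in> unit_space s \<and> p t = p (s \<eta>)}"

end

theory Submission
  imports Defs
begin

theorem mainTheorem10:
  fixes s r :: "'h::t2_space \<Rightarrow> 'h" and m :: "'h \<Rightarrow> 'h \<Rightarrow> 'h" and i :: "'h \<Rightarrow> 'h"
    and p :: "'h \<Rightarrow> 'x::topological_space" and gm :: "'h \<Rightarrow> 'h \<Rightarrow> 'h" and ge :: "'x \<Rightarrow> 'h"
    and lact ract lam rho :: "'h \<Rightarrow> 'h \<Rightarrow> 'h"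
    and \<gamma> \<eta> :: 'h
  assumes "standing_assumption s r m i p gm ge lact ract lam rho"
    and "\<exists>\<gamma>' \<in> orbit s p ract \<gamma>. \<exists>\<eta>' \<in> orbit s p ract \<eta>. s \<gamma>' = r \<eta>'"
  shows "\<forall>\<gamma>'' \<in> orbit s p ract \<gamma>. \<exists>!\<eta>''. \<eta>'' \<in> orbit s p ract \<eta> \<and> s \<gamma>'' = r \<eta>''"
proof -
  define T where "T = unit_space s"
  note SA = assms(1)[unfolded standing_assumption_def Let_def, folded T_def]
  have gpd: "groupoid s r m i" using SA[THEN conjunct1] unfolding etale_groupoid_def by blast
  have sT: "\<And>a. s a \<in> T" unfolding T_def unit_space_def by blast
  have rT: "\<And>a. r a \<in> T"
  proof -
    fix a have "r a = s (i a)" using gpd unfolding groupoid_def by metis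
    thus "r a \<in> T" using sT by simp
  qed
  have ss: "\<And>a. s (s a) = s a" using gpd unfolding groupoid_def by metis
  have sr: "\<And>a. s (r a) = r a" using gpd unfolding groupoid_def by metis
  have "compact_abelian_group_bundle T p gm ge" using SA[THEN conjunct2, THEN conjunct1] by this
  hence CG: "\<And>x. comm_group (fibre_group T p gm ge x)"
    unfolding compact_abelian_group_bundle_def by blast
  have ract_comp: "\<And>\<eta> t1 t2. t1 \<in> T \<Longrightarrow> p t1 = p (s \<eta>) \<Longrightarrow> t2 \<in> T \<Longrightarrow> p t2 = p t1 \<Longrightarrow>
      ract (ract \<eta> t1) t2 = ract \<eta> (gm t1 t2)" using SA[THEN conjunct2, THEN conjunct2, THEN conjunct2, THEN conjunct2, THEN conjunct2, THEN conjunct2, THEN conjunct2, THEN conjunct1] by auto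
  have lact_comp: "\<And>\<eta> t1 t2. t2 \<in> T \<Longrightarrow> p t2 = p (r \<eta>) \<Longrightarrow> t1 \<in> T \<Longrightarrow> p t1 = p t2 \<Longrightarrow>
      lact t1 (lact t2 \<eta>) = lact (gm t1 t2) \<eta>" using SA[THEN conjunct2, THEN conjunct2, THEN conjunct2, THEN conjunct2, THEN conjunct1] by auto
  have lact_one: "\<And>\<eta>. lact (ge (p (r \<eta>))) \<eta> = \<eta>" using SA[THEN conjunct2, THEN conjunct2, THEN conjunct1] by auto
  have ract_one: "\<And>\<eta>. ract \<eta> (ge (p (s \<eta>))) = \<eta>" using SA[THEN conjunct2, THEN conjunct2, THEN conjunct2, THEN conjunct2, THEN conjunct2, THEN conjunct1] by auto
  have ract_p: "\<And>\<eta> t. t \<in> T \<Longrightarrow> p t = p (s \<eta>) \<Longrightarrow> p (s (ract \<eta> t)) = p t" using SA[THEN conjunct2, THEN conjunct2, THEN conjunct2, THEN conjunct2, THEN conjunct2, THEN conjunct2, THEN conjunct1] by auto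
  have lact_free: "\<And>\<eta> t. t \<in> T \<Longrightarrow> p t = p (r \<eta>) \<Longrightarrow> lact t \<eta> = \<eta> \<Longrightarrow> t = ge (p t)" using SA[THEN conjunct2, THEN conjunct2, THEN conjunct2, THEN conjunct2, THEN conjunct2, THEN conjunct2, THEN conjunct2, THEN conjunct2, THEN conjunct2, THEN conjunct2, THEN conjunct2, THEN conjunct1] by auto
  have ract_free: "\<And>\<eta> t. t \<in> T \<Longrightarrow> p t = p (s \<eta>) \<Longrightarrow> ract \<eta> t = \<eta> \<Longrightarrow> t = ge (p t)" using SA[THEN conjunct2, THEN conjunct2, THEN conjunct2, THEN conjunct2, THEN conjunct2, THEN conjunct2, THEN conjunct2, THEN conjunct2, THEN conjunct2, THEN conjunct2, THEN conjunct2, THEN conjunct2, THEN conjunct1] by auto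
  have a1: "\<And>u t. u \<in> T \<Longrightarrow> t \<in> T \<Longrightarrow> p t = p u \<Longrightarrow> lact t u = ract u t" using SA[THEN conjunct2, THEN conjunct2, THEN conjunct2, THEN conjunct2, THEN conjunct2, THEN conjunct2, THEN conjunct2, THEN conjunct2, THEN conjunct2, THEN conjunct2, THEN conjunct2, THEN conjunct2, THEN conjunct2, THEN conjunct2, THEN conjunct2, THEN conjunct1] by auto
  have b1l: "\<And>t \<gamma>. t \<in> T \<Longrightarrow> p t = p (r \<gamma>) \<Longrightarrow> r (lact t \<gamma>) = lact t (r \<gamma>)" using SA[THEN conjunct2, THEN conjunct2, THEN conjunct2, THEN conjunct2, THEN conjunct2, THEN conjunct2, THEN conjunct2, THEN conjunct2, THEN conjunct2, THEN conjunct2, THEN conjunct2, THEN conjunct2, THEN conjunct2, THEN conjunct2, THEN conjunct2, THEN conjunct2, THEN conjunct1] by auto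
  have b1r: "\<And>\<eta> t. t \<in> T \<Longrightarrow> p t = p (s \<eta>) \<Longrightarrow> s (ract \<eta> t) = ract (s \<eta>) t" using SA[THEN conjunct2, THEN conjunct2, THEN conjunct2, THEN conjunct2, THEN conjunct2, THEN conjunct2, THEN conjunct2, THEN conjunct2, THEN conjunct2, THEN conjunct2, THEN conjunct2, THEN conjunct2, THEN conjunct2, THEN conjunct2, THEN conjunct2, THEN conjunct2, THEN conjunct2, THEN conjunct1] by auto
  have lamT: "\<And>\<eta> t. t \<in> T \<Longrightarrow> p t = p (s \<eta>) \<Longrightarrow> lam \<eta> t \<in> T \<and> p (lam \<eta> t) = p (r \<eta>)" using SA[THEN conjunct2, THEN conjunct2, THEN conjunct2, THEN conjunct2, THEN conjunct2, THEN conjunct2, THEN conjunct2, THEN conjunct2, THEN conjunct2, THEN conjunct2, THEN conjunct2, THEN conjunct2, THEN conjunct2, THEN conjunct2, THEN conjunct2, THEN conjunct2, THEN conjunct2, THEN conjunct2, THEN conjunct1] by auto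
  have rhoT: "\<And>\<eta> t. t \<in> T \<Longrightarrow> p t = p (r \<eta>) \<Longrightarrow> rho \<eta> t \<in> T \<and> p (rho \<eta> t) = p (s \<eta>)" using SA[THEN conjunct2, THEN conjunct2, THEN conjunct2, THEN conjunct2, THEN conjunct2, THEN conjunct2, THEN conjunct2, THEN conjunct2, THEN conjunct2, THEN conjunct2, THEN conjunct2, THEN conjunct2, THEN conjunct2, THEN conjunct2, THEN conjunct2, THEN conjunct2, THEN conjunct2, THEN conjunct2, THEN conjunct2, THEN conjunct1] by auto
  have a2: "\<And>\<eta> t. t \<in> T \<Longrightarrow> p t = p (s \<eta>) \<Longrightarrow> ract \<eta> t = lact (lam \<eta> t) \<eta>" using SA[THEN conjunct2, THEN conjunct2, THEN conjunct2, THEN conjunct2, THEN conjunct2, THEN conjunct2, THEN conjunct2, THEN conjunct2, THEN conjunct2, THEN conjunct2, THEN conjunct2, THEN conjunct2, THEN conjunct2, THEN conjunct2, THEN conjunct2, THEN conjunct2, THEN conjunct2, THEN conjunct2, THEN conjunct2, THEN conjunct2, THEN conjunct2, THEN conjunct2, THEN conjunct1] by auto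
  have b2: "\<And>\<eta> t. t \<in> T \<Longrightarrow> p t = p (r \<eta>) \<Longrightarrow> lact t \<eta> = ract \<eta> (rho \<eta> t)" using SA[THEN conjunct2, THEN conjunct2, THEN conjunct2, THEN conjunct2, THEN conjunct2, THEN conjunct2, THEN conjunct2, THEN conjunct2, THEN conjunct2, THEN conjunct2, THEN conjunct2, THEN conjunct2, THEN conjunct2, THEN conjunct2, THEN conjunct2, THEN conjunct2, THEN conjunct2, THEN conjunct2, THEN conjunct2, THEN conjunct2, THEN conjunct2, THEN conjunct2, THEN conjunct2, THEN conjunct1] by auto
  have orb: "\<And>a b. b \<in> orbit s p ract a \<longleftrightarrow> (\<exists>t. t \<in> T \<and> p t = p (s a) \<and> b = ract a t)"
    unfolding orbit_def T_def by blast
  have r_ract: "\<And>t. t \<in> T \<Longrightarrow> p t = p (s \<eta>) \<Longrightarrow> r (ract \<eta> t) = ract (r \<eta>) (lam \<eta> t)"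
  proof -
    fix t assume t: "t \<in> T" "p t = p (s \<eta>)"
    have "r (ract \<eta> t) = r (lact (lam \<eta> t) \<eta>)" using a2 t by simp
    also have "\<dots> = lact (lam \<eta> t) (r \<eta>)" using b1l lamT t by blast
    also have "\<dots> = ract (r \<eta>) (lam \<eta> t)" using a1 lamT t rT by blast
    finally show "r (ract \<eta> t) = ract (r \<eta>) (lam \<eta> t)" .
  qed
  from assms(2) obtain t1 t2 where t1: "t1 \<in> T" "p t1 = p (s \<gamma>)" and t2: "t2 \<in> T" "p t2 = p (s \<eta>)"
    and eq: "s (ract \<gamma> t1) = r (ract \<eta> t2)" using orb by (smt (verit))
  have eq1: "ract (s \<gamma>) t1 = ract (r \<eta>) (lam \<eta> t2)" using eq b1r t1 r_ract t2 by simp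
  have px: "p (s \<gamma>) = p (r \<eta>)"
  proof -
    have "p (s (ract (s \<gamma>) t1)) = p t1" using ract_p t1 ss sT by simp
    moreover have "p (s (ract (r \<eta>) (lam \<eta> t2))) = p (lam \<eta> t2)" using ract_p lamT t2 sr by simp
    ultimately show ?thesis using eq1 t1 lamT t2 by simp
  qed
  define x where "x = p (s \<gamma>)"
  interpret G: comm_group "fibre_group T p gm ge x" by (rule CG)
  have carr: "\<And>a. a \<in> carrier (fibre_group T p gm ge x) \<longleftrightarrow> a \<in> T \<and> p a = x"
    unfolding fibre_group_def fib_def by simp
  have mult: "\<And>a b. a \<otimes>\<^bsub>fibre_group T p gm ge x\<^esub> b = gm a b" unfolding fibre_group_def by simp
  have one: "\<one>\<^bsub>fibre_group T p gm ge x\<^esub> = ge x" unfolding fibre_group_def by simp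
  have rfree: "\<And>a b. a \<in> T \<Longrightarrow> p a = x \<Longrightarrow> b \<in> T \<Longrightarrow> p b = x \<Longrightarrow> ract (r \<eta>) a = ract (r \<eta>) b \<Longrightarrow> a = b"
  proof -
    fix a b assume a: "a \<in> T" "p a = x" and b: "b \<in> T" "p b = x" and e: "ract (r \<eta>) a = ract (r \<eta>) b"
    define bi where "bi = inv\<^bsub>fibre_group T p gm ge x\<^esub> b"
    have bi: "bi \<in> T" "p bi = x" using G.inv_closed[of b] b carr unfolding bi_def by auto
    have abi: "gm a bi \<in> T" "p (gm a bi) = x" using G.m_closed[of a bi] a bi carr mult by auto
    have "ract (r \<eta>) (gm a bi) = ract (ract (r \<eta>) a) bi" using ract_comp a bi sr px x_def by simp
    also have "\<dots> = ract (ract (r \<eta>) b) bi" using e by simp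
    also have "\<dots> = ract (r \<eta>) (gm b bi)" using ract_comp b bi sr px x_def by simp
    also have "gm b bi = ge x" using G.r_inv[of b] b carr mult one unfolding bi_def by auto
    also have "ract (r \<eta>) (ge x) = r \<eta>" using ract_one[of "r \<eta>"] sr px x_def by simp
    finally have "gm a bi = ge x" using ract_free[of "gm a bi" "r \<eta>"] abi sr px x_def by simp
    hence "gm (gm a bi) b = gm (ge x) b" by simp
    thus "a = b" using G.m_assoc[of a bi b] G.l_inv[of b] G.r_one[of a] G.l_one[of b] a b bi carr mult one
      unfolding bi_def by auto
  qed
  have lr: "\<And>a. a \<in> T \<Longrightarrow> p a = x \<Longrightarrow> lam \<eta> (rho \<eta> a) = a"
  proof -
    fix a assume a: "a \<in> T" "p a = x"
    define b where "b = lam \<eta> (rho \<eta> a)"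
    have rh: "rho \<eta> a \<in> T" "p (rho \<eta> a) = p (s \<eta>)" using rhoT a px x_def by auto
    have b: "b \<in> T" "p b = x" using lamT[OF rh] px x_def unfolding b_def by auto
    have e: "lact a \<eta> = lact b \<eta>" using b2[of a \<eta>] a2[OF rh] a px x_def unfolding b_def by simp
    define bi where "bi = inv\<^bsub>fibre_group T p gm ge x\<^esub> b"
    have bi: "bi \<in> T" "p bi = x" using G.inv_closed[of b] b carr unfolding bi_def by auto
    have bia: "gm bi a \<in> T" "p (gm bi a) = x" using G.m_closed[of bi a] a bi carr mult by auto
    have "lact (gm bi a) \<eta> = lact bi (lact a \<eta>)" using lact_comp a bi px x_def by simp
    also have "\<dots> = lact bi (lact b \<eta>)" using e by simp
    also have "\<dots> = lact (gm bi b) \<eta>" using lact_comp b bi px x_def by simp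
    also have "gm bi b = ge x" using G.l_inv[of b] b carr mult one unfolding bi_def by auto
    also have "lact (ge x) \<eta> = \<eta>" using lact_one[of \<eta>] px x_def by simp
    finally have "gm bi a = ge x" using lact_free[of "gm bi a" \<eta>] bia px x_def by simp
    hence "gm b (gm bi a) = gm b (ge x)" by simp
    thus "lam \<eta> (rho \<eta> a) = a" using G.m_assoc[of b bi a] G.r_inv[of b] G.r_one[of b] G.l_one[of a] a b bi carr mult one
      unfolding bi_def b_def by auto
  qed
  show ?thesis
  proof
    fix g assume "g \<in> orbit s p ract \<gamma>"
    then obtain t3 where t3: "t3 \<in> T" "p t3 = p (s \<gamma>)" and g: "g = ract \<gamma> t3" unfolding orb by blast
    have sg: "s g = ract (s \<gamma>) t3" using b1r t3 g by simp
    define t1i where "t1i = inv\<^bsub>fibre_group T p gm ge x\<^esub> t1"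
    have t1i: "t1i \<in> T" "p t1i = x" using G.inv_closed[of t1] t1 carr x_def unfolding t1i_def by auto
    define c where "c = gm t1i t3"
    have c: "c \<in> T" "p c = x" using G.m_closed[of t1i t3] t1i t3 carr mult x_def unfolding c_def by auto
    have l2: "lam \<eta> t2 \<in> T" "p (lam \<eta> t2) = x" using lamT t2 px x_def by auto
    define a where "a = gm (lam \<eta> t2) c"
    have a: "a \<in> T" "p a = x" using G.m_closed[of "lam \<eta> t2" c] l2 c carr mult unfolding a_def by auto
    have t1c: "gm t1 c = t3" using G.m_assoc[of t1 t1i t3] G.r_inv[of t1] G.l_one[of t3] t1 t1i t3 carr mult one x_def
      unfolding c_def t1i_def by auto
    have key: "ract (r \<eta>) a = s g"
    proof -
      have "ract (r \<eta>) a = ract (ract (r \<eta>) (lam \<eta> t2)) c"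
        using ract_comp l2 c sr px x_def unfolding a_def by simp
      also have "\<dots> = ract (ract (s \<gamma>) t1) c" using eq1 by simp
      also have "\<dots> = ract (s \<gamma>) (gm t1 c)" using ract_comp t1 c ss x_def by simp
      finally show ?thesis using t1c sg by simp
    qed
    define t4 where "t4 = rho \<eta> a"
    have t4: "t4 \<in> T" "p t4 = p (s \<eta>)" using rhoT a px x_def unfolding t4_def by auto
    show "\<exists>!e. e \<in> orbit s p ract \<eta> \<and> s g = r e"
    proof
      show "ract \<eta> t4 \<in> orbit s p ract \<eta> \<and> s g = r (ract \<eta> t4)"
        using t4 r_ract[OF t4] lr[OF a] key unfolding orb t4_def by auto
    next
      fix e assume "e \<in> orbit s p ract \<eta> \<and> s g = r e"
      then obtain t5 where t5: "t5 \<in> T" "p t5 = p (s \<eta>)" "e = ract \<eta> t5" and se: "s g = r e"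
        unfolding orb by blast
      have l5: "lam \<eta> t5 \<in> T" "p (lam \<eta> t5) = x" using lamT t5 px x_def by auto
      have l4: "lam \<eta> t4 \<in> T" "p (lam \<eta> t4) = x" using lamT t4 px x_def by auto
      have "ract (r \<eta>) (lam \<eta> t5) = ract (r \<eta>) (lam \<eta> t4)"
        using se t5 r_ract[OF t5(1,2)] r_ract[OF t4] lr[OF a] key unfolding t4_def by simp
      hence "lam \<eta> t5 = lam \<eta> t4" using rfree l5 l4 by blast
      thus "e = ract \<eta> t4" using a2[OF t5(1,2)] a2[OF t4] t5 by simp
    qed
  qed
qed

end
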